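(* Let $M$ be a finite-horizon reward-free MDP, $\Pi\subseteq\Pi_{\mathrm{RNS}}$, and $h\in[H]$. For all $\varepsilon>0$, $\mathsf{Cov}^M_{h,\varepsilon}\le C^M_{\infty;h}$.
   Context: Episodic reward-free MDP $M$ with countable state space $\mathcal{X}$, action space $\mathcal{A}$, horizon $H$; $\Pi_{\mathrm{RNS}}$ is the set of randomized non-stationary policies $\pi=(\pi_h)_{h\le H}$, $\pi_h:\mathcal{X}\to\Delta(\mathcal{A})$. $d^{M,\pi}_h(x,a)$ is the probability that $(x_h,a_h)=(x,a)$ when running $\pi$ in $M$; for $p\in\Delta(\Pi_{\mathrm{RNS}})$, $d^{M,p}_h=\mathbb{E}_{\pi\sim p}d^{M,\pi}_h$. Define $\Psi^M_{h,\varepsilon}(p)=\sup_{\pi\in\Pi}\mathbb{E}^{M,\pi}\big[\frac{d^{M,\pi}_h(x_h,a_h)}{d^{M,p}_h(x_h,a_h)+\varepsilon d^{M,\pi}_h(x_h,a_h)}\big]$, the $L_1$-Coverability $\mathsf{Cov}^M_{h,\varepsilon}=\inf_{p\in\Delta(\Pi)}\Psi^M_{h,\varepsilon}(p)$, and the $L_\infty$-Coverability $C^M_{\infty;h}=\inf_{\mu\in\Delta(\mathcal{X}\times\mathcal{A})}\sup_{\pi\in\Pi}\sup_{(x,a)}\frac{d^{M,\pi}_h(x,a)}{\mu(x,a)}$. *)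

theory Defs
  imports "HOL-Probability.Probability"
begin

text \<open>Episodic reward-free MDP with countable state space: an initial state
distribution (distribution of x_1) and step-dependent transition kernels;
trans M h x a is the law of x_{h+1} given (x_h, a_h) = (x, a).  Steps are 1-indexed.\<close>

record ('x, 'a) mdp =
  init :: "'x pmf"
  trans :: "nat \<Rightarrow> 'x \<Rightarrow> 'a \<Rightarrow> 'x pmf"

type_synonym ('x, 'a) policy = "nat \<Rightarrow> 'x \<Rightarrow> 'a pmf"

text \<open>state_dist M pol n is the law of x_{n+1} when running pol in M.\<close>
primrec state_dist :: "('x, 'a) mdp \<Rightarrow> ('x, 'a) policy \<Rightarrow> nat \<Rightarrow> 'x pmf" where
  "state_dist M pol 0 = init M"
| "state_dist M pol (Suc n) =
     bind_pmf (state_dist M pol n) (\<lambda>x. bind_pmf (pol (Suc n) x) (\<lambda>a. trans M (Suc n) x a))"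

text \<open>Occupancy law of (x_h, a_h), for h \<ge> 1.\<close>
definition occ :: "('x, 'a) mdp \<Rightarrow> ('x, 'a) policy \<Rightarrow> nat \<Rightarrow> ('x \<times> 'a) pmf" where
  "occ M pol h = bind_pmf (state_dist M pol (h - 1)) (\<lambda>x. map_pmf (\<lambda>a. (x, a)) (pol h x))"

definition occd :: "('x, 'a) mdp \<Rightarrow> ('x, 'a) policy \<Rightarrow> nat \<Rightarrow> 'x \<times> 'a \<Rightarrow> real" where
  "occd M pol h z = pmf (occ M pol h) z"

definition occd_mix :: "('x, 'a) mdp \<Rightarrow> ('x, 'a) policy pmf \<Rightarrow> nat \<Rightarrow> 'x \<times> 'a \<Rightarrow> real" where
  "occd_mix M p h z = measure_pmf.expectation p (\<lambda>pol. occd M pol h z)"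

definition Psi :: "('x, 'a) mdp \<Rightarrow> ('x, 'a) policy set \<Rightarrow> nat \<Rightarrow> real \<Rightarrow> ('x, 'a) policy pmf \<Rightarrow> ennreal" where
  "Psi M Pis h eps p = (SUP pol\<in>Pis. \<integral>\<^sup>+ z. ennreal (occd M pol h z / (occd_mix M p h z + eps * occd M pol h z))
                                      \<partial>measure_pmf (occ M pol h))"

definition Cov :: "('x, 'a) mdp \<Rightarrow> ('x, 'a) policy set \<Rightarrow> nat \<Rightarrow> real \<Rightarrow> ennreal" where
  "Cov M Pis h eps = (INF p\<in>{p :: ('x, 'a) policy pmf. set_pmf p \<subseteq> Pis}. Psi M Pis h eps p)"

text \<open>L_infinity-coverability (ratio in ennreal: c/0 = \<infinity> for c>0, 0/0 = 0).\<close>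
definition Cinf :: "('x, 'a) mdp \<Rightarrow> ('x, 'a) policy set \<Rightarrow> nat \<Rightarrow> ennreal" where
  "Cinf M Pis h = (INF mu\<in>(UNIV :: ('x \<times> 'a) pmf set). SUP pol\<in>Pis. SUP z.
                     ennreal (occd M pol h z) / ennreal (pmf mu z))"

end

theory Submission
  imports Defs
begin

lemma occd_nonneg: "0 \<le> occd M pol h z" by (simp add: occd_def)
lemma occd_le1: "occd M pol h z \<le> 1" by (simp add: occd_def pmf_le_1)

lemma occd_mix_nn: "(\<integral>\<^sup>+ q. ennreal (occd M q h z) \<partial>measure_pmf p) = ennreal (occd_mix M p h z)"
proof -
  have nb: "\<bar>occd M x h z\<bar> \<le> 1" for x
    using occd_nonneg[of M x h z] occd_le1[of M x h z] by simp
  have int: "integrable (measure_pmf p) (\<lambda>q. occd M q h z)"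
    by (rule measure_pmf.integrable_const_bound[where B=1]) (simp_all add: nb)
  have "AE q in measure_pmf p. 0 \<le> occd M q h z" by (intro AE_I2) (rule occd_nonneg)
  then show ?thesis unfolding occd_mix_def by (rule nn_integral_eq_integral[OF int])
qed

lemma occd_mix_nonneg: "0 \<le> occd_mix M p h z"
  unfolding occd_mix_def by (rule integral_nonneg_AE) (simp add: occd_nonneg)

lemma occd_mix_le1: "occd_mix M p h z \<le> 1"
proof -
  have "ennreal (occd_mix M p h z) = (\<integral>\<^sup>+ q. ennreal (occd M q h z) \<partial>measure_pmf p)"
    by (simp add: occd_mix_nn)
  also have "\<dots> \<le> (\<integral>\<^sup>+ q. 1 \<partial>measure_pmf p)"
    by (intro nn_integral_mono) (simp add: occd_le1)
  also have "\<dots> = 1" by simp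
  finally show ?thesis by (simp add: ennreal_le_1)
qed

definition mixp :: "real \<Rightarrow> 'p \<Rightarrow> 'p pmf \<Rightarrow> 'p pmf" where
  "mixp t pol p = bind_pmf (bernoulli_pmf t) (\<lambda>b. if b then return_pmf pol else p)"

lemma set_mixp: "set_pmf (mixp t pol p) \<subseteq> insert pol (set_pmf p)"
  unfolding mixp_def by (auto split: if_splits)

lemma occd_mix_mixp:
  assumes "0 \<le> t" "t \<le> 1"
  shows "occd_mix M (mixp t pol p) h z = t * occd M pol h z + (1 - t) * occd_mix M p h z"
proof -
  have "ennreal (occd_mix M (mixp t pol p) h z) = (\<integral>\<^sup>+ q. ennreal (occd M q h z) \<partial>measure_pmf (mixp t pol p))"
    by (simp add: occd_mix_nn)
  also have "\<dots> = (\<integral>\<^sup>+ b. (\<integral>\<^sup>+ q. ennreal (occd M q h z) \<partial>measure_pmf (if b then return_pmf pol else p)) \<partial>measure_pmf (bernoulli_pmf t))"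
    unfolding mixp_def by simp
  also have "\<dots> = (\<Sum>b\<in>{True,False}. (\<integral>\<^sup>+ q. ennreal (occd M q h z) \<partial>measure_pmf (if b then return_pmf pol else p)) * pmf (bernoulli_pmf t) b)"
    by (rule nn_integral_measure_pmf_support) auto
  also have "\<dots> = ennreal (occd M pol h z) * ennreal t + ennreal (occd_mix M p h z) * ennreal (1 - t)"
  proof -
    have i1: "(\<integral>\<^sup>+ q. ennreal (occd M q h z) \<partial>measure_pmf (return_pmf pol)) = ennreal (occd M pol h z)"
      by (simp add: nn_integral_return)
    have i2: "(\<integral>\<^sup>+ q. ennreal (occd M q h z) \<partial>measure_pmf p) = ennreal (occd_mix M p h z)"
      by (rule occd_mix_nn)
    show ?thesis using assms by (simp only: i1 i2 if_True if_False sum.insert finite.emptyI finite.insertI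
       insert_iff empty_iff simp_thms sum.empty pmf_bernoulli_True pmf_bernoulli_False add_0_right)
  qed
  also have "\<dots> = ennreal (t * occd M pol h z + (1 - t) * occd_mix M p h z)"
  proof -
    have e1: "ennreal (occd M pol h z) * ennreal t = ennreal (t * occd M pol h z)"
      by (subst ennreal_mult'[OF assms(1)]) (rule mult.commute)
    have "0 \<le> 1 - t" using assms by simp
    then have e2: "ennreal (occd_mix M p h z) * ennreal (1 - t) = ennreal ((1 - t) * occd_mix M p h z)"
      by (subst ennreal_mult'[OF \<open>0 \<le> 1 - t\<close>]) (rule mult.commute)
    have n1: "0 \<le> t * occd M pol h z" using assms occd_nonneg[of M pol h z] by simp
    have n2: "0 \<le> (1 - t) * occd_mix M p h z" using assms occd_mix_nonneg[of M p h z] by simp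
    show ?thesis unfolding e1 e2 using ennreal_plus[OF n1 n2] by simp
  qed
  finally have eq: "ennreal (occd_mix M (mixp t pol p) h z) = ennreal (t * occd M pol h z + (1 - t) * occd_mix M p h z)" .
  have "0 \<le> t * occd M pol h z + (1 - t) * occd_mix M p h z"
    using assms occd_nonneg[of M pol h z] occd_mix_nonneg[of M p h z] by simp
  then show ?thesis using eq occd_mix_nonneg[of M "mixp t pol p" h z] by (simp add: ennreal_inj)
qed

lemma pmf_tail:
  fixes mu :: "'z pmf"
  assumes "eta > 0"
  shows "\<exists>S. finite S \<and> measure (measure_pmf mu) (UNIV - S) \<le> eta"
proof -
  define f where "f = from_nat_into (set_pmf mu)"
  define A where "A n = f ` {..<n}" for n
  have ne: "set_pmf mu \<noteq> {}" by (simp add: set_pmf_not_empty)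
  have rng: "range f = set_pmf mu" unfolding f_def using ne by simp
  have un: "(\<Union>n. A n) = set_pmf mu" unfolding A_def rng[symmetric] by auto
  have inc: "incseq A" unfolding A_def incseq_def by auto
  have "(\<lambda>n. measure (measure_pmf mu) (A n)) \<longlonglongrightarrow> measure (measure_pmf mu) (\<Union>n. A n)"
    by (rule measure_pmf.finite_Lim_measure_incseq) (auto simp: inc)
  moreover have "measure (measure_pmf mu) (set_pmf mu) = 1"
  proof -
    have "measure (measure_pmf mu) (UNIV - set_pmf mu) = 0"
      by (simp add: measure_pmf_zero_iff)
    then show ?thesis using measure_pmf.prob_compl[of "UNIV - set_pmf mu" mu] by (simp add: Diff_Diff_Int)
  qed
  ultimately have "(\<lambda>n. measure (measure_pmf mu) (A n)) \<longlonglongrightarrow> 1" using un by simp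
  then have "eventually (\<lambda>n. measure (measure_pmf mu) (A n) > 1 - eta) sequentially"
    using assms by (intro order_tendstoD) auto
  then obtain n where n: "measure (measure_pmf mu) (A n) > 1 - eta"
    by (auto dest: eventually_happens)
  have "measure (measure_pmf mu) (UNIV - A n) = 1 - measure (measure_pmf mu) (A n)"
    using measure_pmf.prob_compl[of "A n" mu] by simp
  with n show ?thesis unfolding A_def by (intro exI[of _ "A n"]) (auto simp: A_def)
qed
lemma ineqA: fixes a b :: real assumes "a > 0" "b > 0" shows "(b - a) / b \<le> ln b - ln a"
proof -
  have "ln (a / b) \<le> a / b - 1" using assms by (intro ln_le_minus_one) auto
  then have "ln a - ln b \<le> (a - b) / b" using assms by (simp add: ln_div diff_divide_distrib)
  then show ?thesis by (simp add: diff_divide_distrib)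
qed

lemma ineqB: fixes v w c t g e :: real
  assumes "0 \<le> v" "0 \<le> w" "w \<le> c" "0 < t" "t \<le> e" "t \<le> 1" "g > 0" "e > 0"
  shows "w * (w / (v + e * w)) \<le> c * w / ((1 - t) * v + t * w + g) + g / e^2"
proof (cases "w = 0")
  case True
  have "0 \<le> (1 - t) * v" using assms by simp
  moreover have "0 \<le> t * w" using assms by simp
  ultimately have "0 < (1 - t) * v + t * w + g" using assms by linarith
  then show ?thesis using True assms by simp
next
  case False
  then have wp: "w > 0" using assms by simp
  have ew: "e * w > 0" using assms wp by simp
  have d1: "v + e * w > 0" using assms ew by linarith
  have d2: "v + e * w + g > 0" using d1 assms by linarith
  have "w * (w / (v + e * w)) - w * (w / (v + e * w + g)) = (w * w) / (v + e * w) - (w * w) / (v + e * w + g)"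
    by simp
  also have "\<dots> = ((w * w) * (v + e * w + g) - (w * w) * (v + e * w)) / ((v + e * w) * (v + e * w + g))"
    using d1 d2 by (simp add: diff_frac_eq)
  also have "(w * w) * (v + e * w + g) - (w * w) * (v + e * w) = w * w * g"
    by (simp add: algebra_simps)
  finally have eq1: "w * (w / (v + e * w)) - w * (w / (v + e * w + g)) = w * w * g / ((v + e * w) * (v + e * w + g))" .
  have "(v + e * w) * (v + e * w + g) \<ge> (e * w) * (e * w)"
    using d1 d2 ew assms by (intro mult_mono) auto
  then have "w * w * g / ((v + e * w) * (v + e * w + g)) \<le> w * w * g / ((e * w) * (e * w))"
    using ew assms by (intro divide_left_mono) auto
  also have "w * w * g / ((e * w) * (e * w)) = g / e^2" using wp assms by (simp add: power2_eq_square)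
  finally have "w * w * g / ((v + e * w) * (v + e * w + g)) \<le> g / e^2" .
  with eq1 have 1: "w * (w / (v + e * w)) \<le> w * (w / (v + e * w + g)) + g / e^2" by linarith
  have "0 \<le> (1 - t) * v" using assms by simp
  moreover have "0 \<le> t * w" using assms by simp
  ultimately have den: "0 < (1 - t) * v + t * w + g" using assms by linarith
  have "t * v \<ge> 0" using assms by simp
  moreover have "t * w \<le> e * w" using assms by (intro mult_right_mono) auto
  ultimately have "(1 - t) * v + t * w + g \<le> v + e * w + g"
    by (simp add: algebra_simps)
  then have "w / (v + e * w + g) \<le> w / ((1 - t) * v + t * w + g)"
    using den wp by (intro divide_left_mono) auto
  then have "w * (w / (v + e * w + g)) \<le> w * (w / ((1 - t) * v + t * w + g))"
    using wp by (intro mult_left_mono) auto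
  also have "\<dots> = w * w / ((1 - t) * v + t * w + g)" by simp
  also have "\<dots> \<le> c * w / ((1 - t) * v + t * w + g)"
    using den wp assms by (intro divide_right_mono mult_right_mono) auto
  finally show ?thesis using 1 by simp
qed

lemma ineqC: fixes v w t g :: real
  assumes "0 \<le> v" "0 \<le> w" "0 < t" "t < 1" "g > 0"
  shows "v / ((1 - t) * v + t * w + g) \<le> 1 / (1 - t)"
proof -
  have a: "0 \<le> (1 - t) * v" using assms by simp
  have b: "0 \<le> t * w" using assms by simp
  have den: "0 < (1 - t) * v + t * w + g" using a b assms by linarith
  have "(1 - t) * v \<le> (1 - t) * v + t * w + g" using b assms by linarith
  then have "1 / (1 - t) * ((1 - t) * v) \<le> 1 / (1 - t) * ((1 - t) * v + t * w + g)"
    using assms by (intro mult_left_mono) auto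
  moreover have "1 / (1 - t) * ((1 - t) * v) = v" using assms by simp
  ultimately have "v \<le> 1 / (1 - t) * ((1 - t) * v + t * w + g)" by simp
  then show ?thesis using den by (simp add: pos_divide_le_eq)
qed

lemma ineqD: fixes v w e :: real
  assumes "0 \<le> v" "0 \<le> w" "e > 0"
  shows "w * (w / (v + e * w)) \<le> w / e"
proof (cases "w = 0")
  case True then show ?thesis by simp
next
  case False
  then have "w > 0" using assms by simp
  then have "w / (v + e * w) \<le> w / (e * w)" using assms by (intro divide_left_mono) (auto intro!: mult_pos_pos add_nonneg_pos)
  also have "\<dots> = 1 / e" using \<open>w > 0\<close> by simp
  finally have "w * (w / (v + e * w)) \<le> w * (1 / e)" using \<open>w > 0\<close> by (intro mult_left_mono) auto
  then show ?thesis by simp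
qed

lemma key:
  fixes M :: "('x, 'a) mdp" and mu :: "('x \<times> 'a) pmf" and Pis :: "('x, 'a) policy set"
  assumes ne: "Pis \<noteq> {}" and epos: "eps > 0" and C0: "C \<ge> 0"
    and bound: "\<And>pol z. pol \<in> Pis \<Longrightarrow> occd M pol h z \<le> C * pmf mu z"
    and xi: "xi > 0"
  shows "\<exists>p. set_pmf p \<subseteq> Pis \<and> Psi M Pis h eps p \<le> ennreal (C + xi)"
proof -
  define eta where "eta = xi * eps / (4 * (C + 1))"
  have etapos: "eta > 0" unfolding eta_def using xi epos C0 by simp
  obtain S where Sfin: "finite S" and Stail: "measure (measure_pmf mu) (UNIV - S) \<le> eta"
    using pmf_tail[OF etapos] by blast
  define gam where "gam = xi * eps^2 / (4 * (real (card S) + 1))"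
  have gpos: "gam > 0" unfolding gam_def using xi epos by simp
  define t where "t = min (min eps (1/2)) (xi / (8 * (C + 1)))"
  have tpos: "t > 0" unfolding t_def using epos xi C0 by auto
  have te: "t \<le> eps" unfolding t_def by linarith
  have th: "t \<le> 1/2" unfolding t_def by linarith
  have tx: "t \<le> xi / (8 * (C + 1))" unfolding t_def by linarith
  define del where "del = t * xi / (4 * (C + 1))"
  have delpos: "del > 0" unfolding del_def using tpos xi C0 by simp
  define Phi where "Phi q = (\<Sum>z\<in>S. pmf mu z * ln (occd_mix M q h z + gam))" for q
  define Q where "Q = {q :: ('x, 'a) policy pmf. set_pmf q \<subseteq> Pis}"
  obtain pol0 where "pol0 \<in> Pis" using ne by blast
  then have Qne: "Phi ` Q \<noteq> {}" unfolding Q_def by (auto intro!: exI[of _ "return_pmf pol0"])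
  have Phibd: "Phi q \<le> (\<Sum>z\<in>S. pmf mu z * ln (1 + gam))" for q
    unfolding Phi_def
  proof (intro sum_mono mult_left_mono)
    fix z
    show "ln (occd_mix M q h z + gam) \<le> ln (1 + gam)"
      using occd_mix_le1[of M q h z] occd_mix_nonneg[of M q h z] gpos by simp
  qed simp
  have bdd: "bdd_above (Phi ` Q)" using Phibd by (auto intro!: bdd_aboveI)
  have "Sup (Phi ` Q) - del < Sup (Phi ` Q)" using delpos by simp
  then obtain p where pQ: "p \<in> Q" and popt: "Sup (Phi ` Q) - del < Phi p"
    using less_cSup_iff[OF Qne bdd] by blast
  show ?thesis
  proof (intro exI conjI)
    show "set_pmf p \<subseteq> Pis" using pQ by (simp add: Q_def)
    show "Psi M Pis h eps p \<le> ennreal (C + xi)"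
      unfolding Psi_def
    proof (rule SUP_least)
      fix pol assume pol: "pol \<in> Pis"
      define w where "w z = occd M pol h z" for z
      define v where "v z = occd_mix M p h z" for z
      define vt where "vt z = (1 - t) * v z + t * w z" for z
      have w0: "0 \<le> w z" for z unfolding w_def by (rule occd_nonneg)
      have v0: "0 \<le> v z" for z unfolding v_def by (rule occd_mix_nonneg)
      have wC: "w z \<le> C * pmf mu z" for z unfolding w_def using bound[OF pol] .
      have vtpos: "vt z + gam > 0" for z
      proof -
        have "0 \<le> (1 - t) * v z" using th v0[of z] by simp
        moreover have "0 \<le> t * w z" using tpos w0[of z] by simp
        ultimately show ?thesis unfolding vt_def using gpos by linarith
      qed
      have mixQ: "mixp t pol p \<in> Q" using set_mixp[of t pol p] pol pQ by (auto simp: Q_def)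
      have mixocc: "occd_mix M (mixp t pol p) h z = vt z" for z
        unfolding vt_def v_def w_def using tpos th by (subst occd_mix_mixp) auto
      have "Phi (mixp t pol p) \<le> Sup (Phi ` Q)" using mixQ bdd by (intro cSup_upper) auto
      with popt have gap: "Phi (mixp t pol p) - Phi p \<le> del" by simp
      have "Phi (mixp t pol p) - Phi p = (\<Sum>z\<in>S. pmf mu z * (ln (vt z + gam) - ln (v z + gam)))"
        unfolding Phi_def mixocc v_def by (simp add: sum_subtractf[symmetric] right_diff_distrib)
      also have "\<dots> \<ge> (\<Sum>z\<in>S. pmf mu z * ((vt z + gam - (v z + gam)) / (vt z + gam)))"
      proof (intro sum_mono mult_left_mono)
        fix z show "(vt z + gam - (v z + gam)) / (vt z + gam) \<le> ln (vt z + gam) - ln (v z + gam)"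
          using vtpos[of z] v0[of z] gpos by (intro ineqA) (auto intro: add_nonneg_pos)
      qed simp
      finally have "(\<Sum>z\<in>S. pmf mu z * ((vt z + gam - (v z + gam)) / (vt z + gam))) \<le> del"
        using gap by linarith
      moreover have "(\<Sum>z\<in>S. pmf mu z * ((vt z + gam - (v z + gam)) / (vt z + gam)))
          = t * ((\<Sum>z\<in>S. pmf mu z * w z / (vt z + gam)) - (\<Sum>z\<in>S. pmf mu z * v z / (vt z + gam)))"
        unfolding sum_subtractf[symmetric] sum_distrib_left
        by (intro sum.cong refl) (simp add: vt_def algebra_simps diff_divide_distrib)
      ultimately have X1: "t * ((\<Sum>z\<in>S. pmf mu z * w z / (vt z + gam)) - (\<Sum>z\<in>S. pmf mu z * v z / (vt z + gam))) \<le> del"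
        by simp
      have "(\<Sum>z\<in>S. pmf mu z * v z / (vt z + gam)) \<le> (\<Sum>z\<in>S. pmf mu z * (1 / (1 - t)))"
      proof (intro sum_mono)
        fix z
        have "v z / (vt z + gam) \<le> 1 / (1 - t)"
          unfolding vt_def using v0[of z] w0[of z] tpos th gpos by (intro ineqC) auto
        then have "pmf mu z * (v z / (vt z + gam)) \<le> pmf mu z * (1 / (1 - t))"
          by (rule mult_left_mono) simp
        then show "pmf mu z * v z / (vt z + gam) \<le> pmf mu z * (1 / (1 - t))"
          by simp
      qed
      also have "\<dots> = measure (measure_pmf mu) S / (1 - t)"
        using Sfin by (simp add: measure_measure_pmf_finite sum_divide_distrib)
      also have "\<dots> \<le> 1 / (1 - t)"
        using th by (intro divide_right_mono) auto
      finally have Y: "(\<Sum>z\<in>S. pmf mu z * v z / (vt z + gam)) \<le> 1 / (1 - t)" .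
      have X: "(\<Sum>z\<in>S. pmf mu z * w z / (vt z + gam)) \<le> del / t + 1 / (1 - t)"
      proof -
        have "(\<Sum>z\<in>S. pmf mu z * w z / (vt z + gam)) - (\<Sum>z\<in>S. pmf mu z * v z / (vt z + gam)) \<le> del / t"
          using X1 tpos by (simp add: field_simps mult.commute)
        then show ?thesis using Y by linarith
      qed
      define g1 where "g1 z = C * pmf mu z * w z / (vt z + gam) + gam / eps^2" for z
      have g10: "0 \<le> g1 z" for z unfolding g1_def using C0 w0[of z] vtpos[of z] gpos epos
        by (intro add_nonneg_nonneg divide_nonneg_pos mult_nonneg_nonneg) auto
      have "(\<integral>\<^sup>+ z. ennreal (occd M pol h z / (occd_mix M p h z + eps * occd M pol h z)) \<partial>measure_pmf (occ M pol h))
          = (\<integral>\<^sup>+ z. ennreal (w z * (w z / (v z + eps * w z))) \<partial>count_space UNIV)"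
        unfolding nn_integral_measure_pmf
        by (intro nn_integral_cong) (simp add: w_def v_def occd_def ennreal_mult'[symmetric])
      also have "\<dots> \<le> (\<integral>\<^sup>+ z. ennreal (g1 z) * indicator S z + ennreal (C / eps) * (ennreal (pmf mu z) * indicator (UNIV - S) z) \<partial>count_space UNIV)"
      proof (intro nn_integral_mono)
        fix z
        show "ennreal (w z * (w z / (v z + eps * w z))) \<le> ennreal (g1 z) * indicator S z + ennreal (C / eps) * (ennreal (pmf mu z) * indicator (UNIV - S) z)"
        proof (cases "z \<in> S")
          case True
          have "w z * (w z / (v z + eps * w z)) \<le> g1 z"
            unfolding g1_def vt_def using ineqB[of "v z" "w z" "C * pmf mu z" t eps gam] v0 w0 wC tpos te th gpos epos
            by simp
          then show ?thesis using True by (simp add: ennreal_leI)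
        next
          case False
          have "w z * (w z / (v z + eps * w z)) \<le> w z / eps" using ineqD v0 w0 epos by blast
          also have "\<dots> \<le> C / eps * pmf mu z" using wC[of z] epos by (simp add: divide_right_mono)
          finally show ?thesis using False C0 epos by (simp add: ennreal_mult'[symmetric])
        qed
      qed
      also have "\<dots> = (\<integral>\<^sup>+ z. ennreal (g1 z) * indicator S z \<partial>count_space UNIV) + ennreal (C / eps) * (\<integral>\<^sup>+ z. ennreal (pmf mu z) * indicator (UNIV - S) z \<partial>count_space UNIV)"
        by (simp add: nn_integral_add nn_integral_cmult)
      also have "(\<integral>\<^sup>+ z. ennreal (g1 z) * indicator S z \<partial>count_space UNIV) = ennreal (\<Sum>z\<in>S. g1 z)"
        using Sfin g10 by (simp add: nn_integral_indicator_finite)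
      also have "(\<integral>\<^sup>+ z. ennreal (pmf mu z) * indicator (UNIV - S) z \<partial>count_space UNIV) = ennreal (measure (measure_pmf mu) (UNIV - S))"
        using nn_integral_measure_pmf[of mu "indicator (UNIV - S)", symmetric]
        by (simp add: measure_pmf.emeasure_eq_measure)
      also have "ennreal (\<Sum>z\<in>S. g1 z) + ennreal (C / eps) * ennreal (measure (measure_pmf mu) (UNIV - S))
          = ennreal ((\<Sum>z\<in>S. g1 z) + C / eps * measure (measure_pmf mu) (UNIV - S))"
        using C0 epos g10 by (simp add: ennreal_plus ennreal_mult'[symmetric] sum_nonneg)
      also have "\<dots> \<le> ennreal (C + xi)"
      proof (intro ennreal_leI)
        have s1: "(\<Sum>z\<in>S. g1 z) = C * (\<Sum>z\<in>S. pmf mu z * w z / (vt z + gam)) + real (card S) * (gam / eps^2)"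
          unfolding g1_def by (simp add: sum.distrib sum_distrib_left mult.assoc)
        have a1: "C * (\<Sum>z\<in>S. pmf mu z * w z / (vt z + gam)) \<le> C * (del / t) + C * (1 / (1 - t))"
          using mult_left_mono[OF X C0] by (simp add: distrib_left)
        have a2: "C * (del / t) \<le> xi / 4"
        proof -
          have "C * (del / t) = xi * (C / (C + 1)) / 4" proof -
            have "del / t = xi / (4 * (C + 1))" unfolding del_def using tpos by simp
            then show ?thesis by (simp add: mult.commute)
          qed
          also have "\<dots> \<le> xi * 1 / 4" using xi C0 by (intro divide_right_mono mult_left_mono) auto
          finally show ?thesis by simp
        qed
        have a3: "C * (1 / (1 - t)) \<le> C + xi / 4"
        proof -
          have "1 / (1 - t) \<le> 1 + 2 * t" using tpos th by (simp add: field_simps)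
          then have b1: "C * (1 / (1 - t)) \<le> C * (1 + 2 * t)" using C0 by (rule mult_left_mono)
          have "C * t \<le> C * (xi / (8 * (C + 1)))" using tx C0 by (rule mult_left_mono)
          also have "C * (xi / (8 * (C + 1))) = xi * (C / (C + 1)) / 8" by (simp add: mult.commute)
          also have "\<dots> \<le> xi * 1 / 8" using xi C0 by (intro divide_right_mono mult_left_mono) auto
          finally have "C * t \<le> xi / 8" by simp
          then show ?thesis using b1 by (simp add: algebra_simps)
        qed
        have a4: "real (card S) * (gam / eps^2) \<le> xi / 4"
        proof -
          have "real (card S) * (gam / eps^2) = xi * (real (card S) / (real (card S) + 1)) / 4"
          proof -
            have "gam / eps^2 = xi / (4 * (real (card S) + 1))" unfolding gam_def using epos by simp
            then show ?thesis by (simp add: mult.commute)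
          qed
          also have "\<dots> \<le> xi * 1 / 4" using xi by (intro divide_right_mono mult_left_mono) auto
          finally show ?thesis by simp
        qed
        have a5: "C / eps * measure (measure_pmf mu) (UNIV - S) \<le> xi / 4"
        proof -
          have "C / eps * measure (measure_pmf mu) (UNIV - S) \<le> C / eps * eta"
            using Stail C0 epos by (intro mult_left_mono) auto
          also have "\<dots> = xi * (C / (C + 1)) / 4" unfolding eta_def using epos C0 by (simp add: field_simps)
          also have "\<dots> \<le> xi * 1 / 4" using xi C0 by (intro divide_right_mono mult_left_mono) auto
          finally show ?thesis by simp
        qed
        show "(\<Sum>z\<in>S. g1 z) + C / eps * measure (measure_pmf mu) (UNIV - S) \<le> C + xi"
          using s1 a1 a2 a3 a4 a5 by linarith
      qed
      finally show "(\<integral>\<^sup>+ z. ennreal (occd M pol h z / (occd_mix M p h z + eps * occd M pol h z)) \<partial>measure_pmf (occ M pol h)) \<le> ennreal (C + xi)" .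
    qed
  qed
qed

theorem proposition3p2:
  fixes M :: "('x :: countable, 'a) mdp"
    and Pis :: "('x, 'a) policy set"
    and H h :: nat and eps :: real
  assumes "Pis \<noteq> {}"
    and "1 \<le> h" and "h \<le> H"
    and "eps > 0"
  shows "Cov M Pis h eps \<le> Cinf M Pis h"
  unfolding Cinf_def
proof (rule INF_greatest)
  fix mu :: "('x \<times> 'a) pmf"
  define K where "K = (SUP pol\<in>Pis. SUP z. ennreal (occd M pol h z) / ennreal (pmf mu z))"
  have "Cov M Pis h eps \<le> K"
  proof (cases K rule: ennreal_cases)
    case top then show ?thesis by simp
  next
    case (real C)
    have bound: "occd M pol h z \<le> C * pmf mu z" if pol: "pol \<in> Pis" for pol z
    proof -
      have le: "ennreal (occd M pol h z) / ennreal (pmf mu z) \<le> ennreal C"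
        unfolding real(2)[symmetric] K_def using pol
        by (intro SUP_upper2[OF pol] SUP_upper) auto
      show ?thesis
      proof (cases "pmf mu z = 0")
        case True
        then have "occd M pol h z = 0" using le occd_nonneg[of M pol h z]
          by (auto split: if_splits simp: top_unique)
        then show ?thesis using True by simp
      next
        case False
        then have mp: "pmf mu z > 0" using pmf_nonneg[of mu z] by linarith
        then have "ennreal (occd M pol h z / pmf mu z) \<le> ennreal C"
          using le occd_nonneg[of M pol h z] by (simp add: divide_ennreal)
        then have "occd M pol h z / pmf mu z \<le> C" using real(1) by (simp add: ennreal_le_iff)
        then show ?thesis using mp by (simp add: divide_le_eq)
      qed
    qed
    show ?thesis unfolding real(2)
    proof (rule ennreal_le_epsilon)
      fix e :: real assume e: "e > 0"
      obtain p where p: "set_pmf p \<subseteq> Pis" and pb: "Psi M Pis h eps p \<le> ennreal (C + e)"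
        using key[OF assms(1) assms(4) real(1) bound e] by blast
      have "Cov M Pis h eps \<le> Psi M Pis h eps p" unfolding Cov_def using p by (intro INF_lower) simp
      also note pb
      also have "ennreal (C + e) = ennreal C + ennreal e" using real(1) e by (simp add: ennreal_plus)
      finally show "Cov M Pis h eps \<le> ennreal C + ennreal e" .
    qed
  qed
  then show "Cov M Pis h eps \<le> (SUP pol\<in>Pis. SUP z. ennreal (occd M pol h z) / ennreal (pmf mu z))"
    unfolding K_def .
qed

end
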